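(* Let $(\Omega,\mathcal{F},\mathbb{P})$ be a complete probability space and $X=\{X_t\}_{t\geq0}$ a real-valued stochastic process with almost surely continuous paths such that $X_t$ has a density (with respect to Lebesgue measure) for every $t\in(0,\infty)$. Let $AP$ be a set of atomic formulas, each $a\in AP$ interpreted by a Borel set $B_a\subset\mathbb{R}$ whose boundary $\partial B_a$ has Lebesgue measure zero. Then for every MTL-formula $\phi$ there exists $K\in\mathcal{F}\otimes\mathcal{B}([0,\infty))$ such that (i) $\{t : (\omega,t)\in K\}$ is almost surely closed; (ii) $\{t : (\omega,t)\in K\}$ has Lebesgue measure zero almost surely; (iii) $\mathbb{P}(\{\omega : (\omega,t)\in K\})=0$ for every $t\in(0,\infty)$; (iv) $\partial\llbracket\phi\rrbracket_\omega\subset\{t : (\omega,t)\in K\}$.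
   Context: MTL-formulas are built from atomic formulas by $\lnot$, $\wedge$, and until operators $\mathcal{U}_I$ ($I$ an interval in $[0,\infty)$), with $\Diamond_I\phi:=\top\,\mathcal{U}_I\phi$ meaning $\exists s\in I$: $X(\omega),t+s\models\phi$; $X(\omega),t\models a$ iff $X_t(\omega)\in B_a$. $\llbracket\phi\rrbracket_\omega:=\{t\geq0 : X(\omega),t\models\phi\}$, and $\partial$ denotes the boundary in $[0,\infty)$. *)

theory Defs
  imports "HOL-Probability.Probability"
begin

datatype 'a mtl =
    MTrue
  | Atom 'a
  | Neg "'a mtl"
  | Conj "'a mtl" "'a mtl"
  | Until "'a mtl" "real set" "'a mtl"

fun wf_mtl :: "'a mtl \<Rightarrow> bool" where
  "wf_mtl MTrue = True"
| "wf_mtl (Atom a) = True"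
| "wf_mtl (Neg \<phi>) = wf_mtl \<phi>"
| "wf_mtl (Conj \<phi> \<psi>) = (wf_mtl \<phi> \<and> wf_mtl \<psi>)"
| "wf_mtl (Until \<phi> I \<psi>) = (is_interval I \<and> I \<subseteq> {0..} \<and> wf_mtl \<phi> \<and> wf_mtl \<psi>)"

fun sat :: "('a \<Rightarrow> real set) \<Rightarrow> (real \<Rightarrow> real) \<Rightarrow> 'a mtl \<Rightarrow> real \<Rightarrow> bool" where
  "sat B x MTrue t = True"
| "sat B x (Atom a) t = (x t \<in> B a)"
| "sat B x (Neg \<phi>) t = (\<not> sat B x \<phi> t)"
| "sat B x (Conj \<phi> \<psi>) t = (sat B x \<phi> t \<and> sat B x \<psi> t)"
| "sat B x (Until \<phi> I \<psi>) t =
     (\<exists>s\<in>I. sat B x \<psi> (t + s) \<and> (\<forall>s'\<in>{0..<s}. sat B x \<phi> (t + s')))"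

definition sem :: "('a \<Rightarrow> real set) \<Rightarrow> (real \<Rightarrow> 'w \<Rightarrow> real) \<Rightarrow> 'a mtl \<Rightarrow> 'w \<Rightarrow> real set" where
  "sem B X \<phi> \<omega> = {t. t \<ge> 0 \<and> sat B (\<lambda>s. X s \<omega>) \<phi> t}"

end

theory Submission
  imports Defs
begin


definition lc :: "real set \<Rightarrow> real \<Rightarrow> bool" where
  "lc S x \<longleftrightarrow> (\<exists>e>0. \<forall>y. \<bar>y - x\<bar> < e \<longrightarrow> (y \<in> S \<longleftrightarrow> x \<in> S))"

lemma lc_iff: "lc S x \<longleftrightarrow> x \<notin> frontier S"
proof
  assume "lc S x"
  then obtain e where e: "e > 0" "\<And>y. \<bar>y - x\<bar> < e \<Longrightarrow> (y \<in> S \<longleftrightarrow> x \<in> S)"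
    unfolding lc_def by blast
  show "x \<notin> frontier S"
  proof
    assume "x \<in> frontier S"
    then have "(\<exists>y\<in>S. dist x y < e) \<and> (\<exists>y. y \<notin> S \<and> dist x y < e)"
      using e(1) by (auto simp: frontier_straddle)
    then show False using e(2) by (auto simp: dist_real_def abs_minus_commute)
  qed
next
  assume "x \<notin> frontier S"
  then obtain e where "e > 0" and e: "(\<forall>y\<in>S. \<not> dist x y < e) \<or> (\<forall>y. y \<notin> S \<longrightarrow> \<not> dist x y < e)"
    by (auto simp: frontier_straddle)
  then show "lc S x"
    unfolding lc_def
    by (intro exI[of _ e]) (auto simp: dist_real_def abs_minus_commute)
qed

lemma interval_below:
  fixes I :: "real set"
  assumes "is_interval I" "s \<in> I" "u \<notin> I" "u < s" "y \<in> I" shows "u < y"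
proof (rule ccontr)
  assume "\<not> u < y"
  then have "y \<le> u" by simp
  then have "u \<in> I" using is_interval_1[THEN iffD1, OF assms(1), rule_format, of y s u] assms by simp
  then show False using assms by simp
qed

lemma interval_above:
  fixes I :: "real set"
  assumes "is_interval I" "s \<in> I" "u \<notin> I" "s < u" "y \<in> I" shows "y < u"
proof (rule ccontr)
  assume "\<not> y < u"
  then have "u \<le> y" by simp
  then have "u \<in> I" using is_interval_1[THEN iffD1, OF assms(1), rule_format, of s y u] assms by simp
  then show False using assms by simp
qed

lemma lc2:
  assumes "lc P x" "lc Q x"
  shows "\<exists>e>0. \<forall>y. \<bar>y - x\<bar> < e \<longrightarrow> (y \<in> P \<longleftrightarrow> x \<in> P) \<and> (y \<in> Q \<longleftrightarrow> x \<in> Q)"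
proof -
  obtain e1 where e1: "e1 > 0" "\<forall>y. \<bar>y - x\<bar> < e1 \<longrightarrow> (y \<in> P \<longleftrightarrow> x \<in> P)"
    using assms(1) unfolding lc_def by blast
  obtain e2 where e2: "e2 > 0" "\<forall>y. \<bar>y - x\<bar> < e2 \<longrightarrow> (y \<in> Q \<longleftrightarrow> x \<in> Q)"
    using assms(2) unfolding lc_def by blast
  show ?thesis
  proof (intro exI[of _ "min e1 e2"] conjI allI impI)
    show "min e1 e2 > 0" using e1(1) e2(1) by simp
    fix y assume y: "\<bar>y - x\<bar> < min e1 e2"
    then have y1: "\<bar>y - x\<bar> < e1" and y2: "\<bar>y - x\<bar> < e2" by simp_all
    show "y \<in> P \<longleftrightarrow> x \<in> P" using e1(2)[rule_format, OF y1] .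
    show "y \<in> Q \<longleftrightarrow> x \<in> Q" using e2(2)[rule_format, OF y2] .
  qed
qed

lemma W_const:
  fixes P Q :: "real set"
  assumes "t0 \<in> P"
    and Ec: "\<forall>y. \<bar>y - (t0+c)\<bar> < e \<longrightarrow> (y\<in>P \<longleftrightarrow> t0+c\<in>P) \<and> (y\<in>Q \<longleftrightarrow> t0+c\<in>Q)"
    and p1: "\<bar>p1 - c\<bar> < e" and p2: "\<bar>p2 - c\<bar> < e"
    and W1: "t0+p1 \<in> Q" "\<forall>q\<in>{0..<p1}. t0+q\<in>P"
  shows "t0+p2 \<in> Q \<and> (\<forall>q\<in>{0..<p2}. t0+q \<in> P)"
proof
  have a1: "\<bar>(t0+p1) - (t0+c)\<bar> < e" "\<bar>(t0+p2) - (t0+c)\<bar> < e" using p1 p2 by simp_all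
  show "t0+p2 \<in> Q" using Ec[rule_format, OF a1(1)] Ec[rule_format, OF a1(2)] W1(1) by blast
  show "\<forall>q\<in>{0..<p2}. t0+q \<in> P"
  proof
    fix q assume q: "q \<in> {0..<p2}"
    show "t0 + q \<in> P"
    proof (cases "q < p1")
      case True then show ?thesis using W1(2) q by simp
    next
      case False
      then have qc: "\<bar>q - c\<bar> < e" using q p1 p2 by (simp add: abs_less_iff)
      have "t0 + c \<in> P"
      proof (cases "p1 > 0")
        case True
        define d where "d = e - \<bar>p1 - c\<bar>"
        define q' where "q' = max 0 (p1 - d/2)"
        have "d > 0" using p1 d_def by simp
        then have "q' \<in> {0..<p1}" "\<bar>q' - c\<bar> < e" using True p1 unfolding q'_def d_def
          by (auto simp: max_def abs_if split: if_splits) (simp_all add: field_simps)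
        then have "t0 + q' \<in> P" "\<bar>(t0 + q') - (t0 + c)\<bar> < e" using W1(2) by simp_all
        then show ?thesis using Ec by blast
      next
        case False
        then have "\<bar>t0 - (t0 + c)\<bar> < e" using qc p1 q by (simp add: abs_less_iff)
        then show ?thesis using Ec assms(1) by blast
      qed
      moreover have "\<bar>(t0 + q) - (t0 + c)\<bar> < e" using qc by simp
      ultimately show ?thesis using Ec by blast
    qed
  qed
qed

lemma until_lc:
  fixes I P Q :: "real set" and t0 :: real
  assumes I: "is_interval I" "I \<subseteq> {0..}" "I \<noteq> {}"
    and h0: "lc P t0" "lc Q t0"
    and ha: "lc P (t0 + Inf I)" "lc Q (t0 + Inf I)"
    and hb: "bdd_above I \<Longrightarrow> lc P (t0 + Sup I)" "bdd_above I \<Longrightarrow> lc Q (t0 + Sup I)"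
  shows "lc {t. \<exists>s\<in>I. t + s \<in> Q \<and> (\<forall>s'\<in>{0..<s}. t + s' \<in> P)} t0"
proof -
  define a where "a = Inf I"
  define b where "b = Sup I"
  let ?U = "{t. \<exists>s\<in>I. t + s \<in> Q \<and> (\<forall>s'\<in>{0..<s}. t + s' \<in> P)}"
  have bb: "bdd_below I" using I(2) by (auto intro: bdd_belowI[of _ 0])
  obtain e0 where e0: "e0>0" "\<forall>y. \<bar>y - t0\<bar> < e0 \<longrightarrow> (y\<in>P \<longleftrightarrow> t0\<in>P) \<and> (y\<in>Q \<longleftrightarrow> t0\<in>Q)"
    using lc2[OF h0] by blast
  obtain ea where ea: "ea>0" "\<forall>y. \<bar>y - (t0+a)\<bar> < ea \<longrightarrow> (y\<in>P \<longleftrightarrow> t0+a\<in>P) \<and> (y\<in>Q \<longleftrightarrow> t0+a\<in>Q)"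
    using lc2[OF ha] unfolding a_def by blast
  obtain eb where eb: "eb>0" "bdd_above I \<longrightarrow> (\<forall>y. \<bar>y - (t0+b)\<bar> < eb \<longrightarrow> (y\<in>P \<longleftrightarrow> t0+b\<in>P) \<and> (y\<in>Q \<longleftrightarrow> t0+b\<in>Q))"
  proof (cases "bdd_above I")
    case True
    obtain e' where "e'>0" "\<forall>y. \<bar>y - (t0+b)\<bar> < e' \<longrightarrow> (y\<in>P \<longleftrightarrow> t0+b\<in>P) \<and> (y\<in>Q \<longleftrightarrow> t0+b\<in>Q)"
      using lc2[OF hb[OF True]] unfolding b_def by blast
    then show ?thesis using that[of e'] by blast
  next
    case False then show ?thesis using that[of 1] by simp
  qed
  define e where "e = min e0 (min ea eb)"
  have e: "e > 0" "e \<le> e0" "e \<le> ea" "e \<le> eb" using e0 ea eb by (simp_all add: e_def)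
  show ?thesis
  proof (cases "t0 \<in> P")
    case False
    have key: "t \<in> ?U \<longleftrightarrow> 0 \<in> I \<and> t \<in> Q" if t: "\<bar>t - t0\<bar> < e" for t
    proof -
      have h1: "\<bar>t - t0\<bar> < e0" using t e(2) by simp
      have tP: "t \<notin> P" using e0(2)[rule_format, OF h1] False by simp
      show ?thesis
      proof
        assume "t \<in> ?U"
        then obtain s where s: "s\<in>I" "t+s\<in>Q" "\<forall>s'\<in>{0..<s}. t+s'\<in>P" by blast
        have "s \<ge> 0" using I(2) s(1) by auto
        have "s = 0"
        proof (rule ccontr)
          assume "s \<noteq> 0"
          then have "0 \<in> {0..<s}" using \<open>s\<ge>0\<close> by simp
          then have "t + 0 \<in> P" using s(3) by blast
          with tP show False by simp
        qed
        then show "0\<in>I \<and> t\<in>Q" using s by simp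
      next
        assume "0\<in>I \<and> t\<in>Q" then show "t\<in>?U" by (intro CollectI bexI[of _ 0]) auto
      qed
    qed
    show ?thesis unfolding lc_def
    proof (intro exI[of _ e] conjI allI impI)
      show "e>0" by fact
      fix y assume y: "\<bar>y - t0\<bar> < e"
      then have "\<bar>y - t0\<bar> < e0" using e(2) by simp
      then have "y \<in> Q \<longleftrightarrow> t0 \<in> Q" using e0(2) by blast
      then show "y \<in> ?U \<longleftrightarrow> t0 \<in> ?U" using key[OF y] key[of t0] e(1) by simp
    qed
  next
    case True
    define W where "W = {p. t0+p \<in> Q \<and> (\<forall>q\<in>{0..<p}. t0+q \<in> P)}"
    have inP: "t0 + y \<in> P" if "\<bar>y\<bar> < e" for y
    proof -
      have h1: "\<bar>(t0 + y) - t0\<bar> < e0" using that e(2) by simp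
      show ?thesis using e0(2)[rule_format, OF h1] True by simp
    qed
    have C1: "t0 + h \<in> ?U \<longleftrightarrow> (\<exists>s\<in>I. h+s \<in> W)" if h: "\<bar>h\<bar> < e" for h
    proof -
      have eq: "(\<forall>s'\<in>{0..<s}. t0+h+s' \<in> P) \<longleftrightarrow> (\<forall>q\<in>{0..<h+s}. t0+q \<in> P)" for s
      proof
        assume A: "\<forall>s'\<in>{0..<s}. t0+h+s' \<in> P"
        show "\<forall>q\<in>{0..<h+s}. t0+q \<in> P"
        proof
          fix q assume q: "q \<in> {0..<h+s}"
          show "t0+q \<in> P"
          proof (cases "q \<ge> h")
            case True then have "q - h \<in> {0..<s}" using q by simp
            then have "t0+h+(q-h) \<in> P" using A by blast
            then show ?thesis by simp
          next
            case False
            then have "\<bar>q\<bar> < e" using q h by (simp add: abs_less_iff)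
            then show ?thesis by (rule inP)
          qed
        qed
      next
        assume A: "\<forall>q\<in>{0..<h+s}. t0+q \<in> P"
        show "\<forall>s'\<in>{0..<s}. t0+h+s' \<in> P"
        proof
          fix s' assume s': "s' \<in> {0..<s}"
          show "t0+h+s' \<in> P"
          proof (cases "h + s' \<ge> 0")
            case True then have "h+s' \<in> {0..<h+s}" using s' by simp
            then have "t0 + (h+s') \<in> P" using A by blast
            then show ?thesis by (simp add: add.assoc)
          next
            case False
            then have "\<bar>h+s'\<bar> < e" using s' h by (simp add: abs_less_iff)
            then have "t0+(h+s') \<in> P" by (rule inP)
            then show ?thesis by (simp add: add.assoc)
          qed
        qed
      qed
      have "t0+h \<in> ?U \<longleftrightarrow> (\<exists>s\<in>I. t0+h+s \<in> Q \<and> (\<forall>s'\<in>{0..<s}. t0+h+s' \<in> P))" by simp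
      also have "\<dots> \<longleftrightarrow> (\<exists>s\<in>I. t0+(h+s) \<in> Q \<and> (\<forall>q\<in>{0..<h+s}. t0+q\<in>P))"
        apply (rule bex_cong[OF refl])
        apply (rule conj_cong)
         apply (simp add: add.assoc)
        apply (rule eq)
        done
      also have "\<dots> \<longleftrightarrow> (\<exists>s\<in>I. h+s\<in>W)" by (simp add: W_def)
      finally show ?thesis .
    qed
    have Wa: "p2 \<in> W" if "p1 \<in> W" "\<bar>p1 - a\<bar> < e" "\<bar>p2 - a\<bar> < e" for p1 p2
    proof -
      have b1: "\<bar>p1 - a\<bar> < ea" "\<bar>p2 - a\<bar> < ea" using that e by auto
      have w1: "t0+p1 \<in> Q" "\<forall>q\<in>{0..<p1}. t0+q\<in>P" using that(1) unfolding W_def by simp_all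
      have "t0+p2 \<in> Q \<and> (\<forall>q\<in>{0..<p2}. t0+q \<in> P)" by (rule W_const[OF True ea(2) b1 w1])
      then show ?thesis unfolding W_def by simp
    qed
    have Wb: "p2 \<in> W" if "bdd_above I" "p1 \<in> W" "\<bar>p1 - b\<bar> < e" "\<bar>p2 - b\<bar> < e" for p1 p2
    proof -
      have "\<bar>p1 - b\<bar> < eb" "\<bar>p2 - b\<bar> < eb" using that e by auto
      moreover have "\<forall>y. \<bar>y - (t0+b)\<bar> < eb \<longrightarrow> (y\<in>P \<longleftrightarrow> t0+b\<in>P) \<and> (y\<in>Q \<longleftrightarrow> t0+b\<in>Q)"
        using eb(2) that(1) by blast
      moreover have w1: "t0+p1 \<in> Q" "\<forall>q\<in>{0..<p1}. t0+q\<in>P" using that(2) unfolding W_def by simp_all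
      ultimately have "t0+p2 \<in> Q \<and> (\<forall>q\<in>{0..<p2}. t0+q \<in> P)" using W_const[OF True] by blast
      then show ?thesis unfolding W_def by simp
    qed
    have C3: "(\<exists>s\<in>I. h+s\<in>W) \<longleftrightarrow> (\<exists>s\<in>I. s\<in>W)" if h: "\<bar>h\<bar><e" for h
    proof
      assume "\<exists>s\<in>I. h+s \<in> W"
      then obtain s where s: "s\<in>I" "h+s\<in>W" by blast
      show "\<exists>s\<in>I. s\<in>W"
      proof (cases "h+s \<in> I")
        case True with s show ?thesis by blast
      next
        case False
        show ?thesis
        proof (cases "h > 0")
          case True
          have "s < h+s" using True by simp
          then have lt: "\<forall>y\<in>I. y < h+s" using interval_above[OF I(1) s(1) False] by blast
          then have bdd: "bdd_above I" by (meson bdd_aboveI less_imp_le)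
          have "b \<le> h+s" unfolding b_def using lt I(3) by (meson cSup_least less_imp_le)
          have "s \<le> b" unfolding b_def using s(1) bdd by (rule cSup_upper)
          have hs: "\<bar>h+s - b\<bar> < e" using \<open>b \<le> h+s\<close> \<open>s \<le> b\<close> h by (simp add: abs_less_iff)
          have "b - e < b" using e(1) by simp
          then obtain s' where s': "s'\<in>I" "b - e < s'" using less_cSup_iff[OF I(3) bdd] unfolding b_def by blast
          have "s' \<le> b" unfolding b_def using s'(1) bdd by (rule cSup_upper)
          then have "\<bar>s' - b\<bar> < e" using s'(2) by (simp add: abs_less_iff)
          then have "s' \<in> W" using Wb[OF bdd s(2) hs] by blast
          then show ?thesis using s' by blast
        next
          case False
          have "h \<noteq> 0" using \<open>h+s \<notin> I\<close> s(1) by auto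
          then have "h+s < s" using False by simp
          then have gt: "\<forall>y\<in>I. h+s < y" using interval_below[OF I(1) s(1) \<open>h+s \<notin> I\<close>] by blast
          have "h+s \<le> a" unfolding a_def using gt I(3) by (meson cInf_greatest less_imp_le)
          have "a \<le> s" unfolding a_def using s(1) bb by (rule cInf_lower)
          have hs: "\<bar>h+s - a\<bar> < e" using \<open>h+s \<le> a\<close> \<open>a \<le> s\<close> h by (simp add: abs_less_iff)
          have "a < a + e" using e(1) by simp
          then obtain s' where s': "s'\<in>I" "s' < a + e" using cInf_less_iff[OF I(3) bb] unfolding a_def by blast
          have "a \<le> s'" unfolding a_def using s'(1) bb by (rule cInf_lower)
          then have "\<bar>s' - a\<bar> < e" using s'(2) by (simp add: abs_less_iff)
          then have "s' \<in> W" using Wa[OF s(2) hs] by blast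
          then show ?thesis using s' by blast
        qed
      qed
    next
      assume "\<exists>s\<in>I. s\<in>W"
      then obtain s where s: "s\<in>I" "s\<in>W" by blast
      show "\<exists>s\<in>I. h+s\<in>W"
      proof (cases "s - h \<in> I")
        case True then show ?thesis using s by (intro bexI[of _ "s-h"]) auto
      next
        case False
        show ?thesis
        proof (cases "h > 0")
          case True
          have "s - h < s" using True by simp
          then have gt: "\<forall>y\<in>I. s - h < y" using interval_below[OF I(1) s(1) False] by blast
          have "s - h \<le> a" unfolding a_def using gt I(3) by (meson cInf_greatest less_imp_le)
          have "a \<le> s" unfolding a_def using s(1) bb by (rule cInf_lower)
          have hs: "\<bar>s - a\<bar> < e" using \<open>s - h \<le> a\<close> \<open>a \<le> s\<close> h by (simp add: abs_less_iff)
          have "a < a + (e - h)" using h by (simp add: abs_less_iff)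
          then obtain s' where s': "s'\<in>I" "s' < a + (e - h)" using cInf_less_iff[OF I(3) bb] unfolding a_def by blast
          have "a \<le> s'" unfolding a_def using s'(1) bb by (rule cInf_lower)
          then have "\<bar>h + s' - a\<bar> < e" using s'(2) True by (simp add: abs_less_iff)
          then have "h + s' \<in> W" using Wa[OF s(2) hs] by blast
          then show ?thesis using s' by blast
        next
          case False
          have "h \<noteq> 0" using \<open>s - h \<notin> I\<close> s(1) by auto
          then have "s < s - h" using False by simp
          then have lt: "\<forall>y\<in>I. y < s - h" using interval_above[OF I(1) s(1) \<open>s - h \<notin> I\<close>] by blast
          then have bdd: "bdd_above I" by (meson bdd_aboveI less_imp_le)
          have "b \<le> s - h" unfolding b_def using lt I(3) by (meson cSup_least less_imp_le)
          have "s \<le> b" unfolding b_def using s(1) bdd by (rule cSup_upper)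
          have hs: "\<bar>s - b\<bar> < e" using \<open>b \<le> s - h\<close> \<open>s \<le> b\<close> h by (simp add: abs_less_iff)
          have "b - (e + h) < b" using h by (simp add: abs_less_iff)
          then obtain s' where s': "s'\<in>I" "b - (e + h) < s'" using less_cSup_iff[OF I(3) bdd] unfolding b_def by blast
          have "s' \<le> b" unfolding b_def using s'(1) bdd by (rule cSup_upper)
          then have "\<bar>h + s' - b\<bar> < e" using s'(2) False h by (simp add: abs_less_iff)
          then have "h + s' \<in> W" using Wb[OF bdd s(2) hs] by blast
          then show ?thesis using s' by blast
        qed
      qed
    qed
    show ?thesis unfolding lc_def
    proof (intro exI[of _ e] conjI allI impI)
      show "e>0" by fact
      fix y assume y: "\<bar>y - t0\<bar> < e"
      have "y \<in> ?U \<longleftrightarrow> t0 + (y - t0) \<in> ?U" by simp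
      also have "\<dots> \<longleftrightarrow> (\<exists>s\<in>I. (y-t0)+s \<in> W)" using C1[of "y - t0"] y by blast
      also have "\<dots> \<longleftrightarrow> (\<exists>s\<in>I. s\<in>W)" using C3 y by blast
      also have "\<dots> \<longleftrightarrow> t0 + 0 \<in> ?U" using C1[of 0] e(1) by simp
      finally show "y \<in> ?U \<longleftrightarrow> t0 \<in> ?U" by simp
    qed
  qed
qed

fun shifts :: "'a mtl \<Rightarrow> ('a \<times> real) set" where
  "shifts MTrue = {}"
| "shifts (Atom a) = {(a, 0)}"
| "shifts (Neg \<phi>) = shifts \<phi>"
| "shifts (Conj \<phi> \<psi>) = shifts \<phi> \<union> shifts \<psi>"
| "shifts (Until \<phi> I \<psi>) =
     (\<Union>c\<in>{0, max 0 (Inf I), max 0 (Sup I)}. (\<lambda>(a,d). (a, d + c)) ` (shifts \<phi> \<union> shifts \<psi>))"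

lemma shifts_finite: "finite (shifts \<phi>)"
  by (induction \<phi>) auto

lemma shifts_nonneg: "(a, c) \<in> shifts \<phi> \<Longrightarrow> c \<ge> 0"
  by (induction \<phi> arbitrary: a c) auto

definition Rset :: "('a \<Rightarrow> real set) \<Rightarrow> (real \<Rightarrow> real) \<Rightarrow> 'a mtl \<Rightarrow> real set" where
  "Rset B x \<phi> = {t. \<exists>(a,c)\<in>shifts \<phi>. x (t + c) \<in> frontier (B a)}"

lemma atom_frontier:
  fixes x :: "real \<Rightarrow> real"
  assumes "continuous_on UNIV x"
  shows "frontier {t. x t \<in> B} \<subseteq> {t. x t \<in> frontier B}"
proof
  fix t assume t: "t \<in> frontier {t. x t \<in> B}"
  show "t \<in> {t. x t \<in> frontier B}"
  proof (rule ccontr)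
    assume "t \<notin> {t. x t \<in> frontier B}"
    then have "lc B (x t)" by (simp add: lc_iff)
    then obtain e where e: "e > 0" "\<forall>y. \<bar>y - x t\<bar> < e \<longrightarrow> (y \<in> B \<longleftrightarrow> x t \<in> B)"
      unfolding lc_def by blast
    obtain d where d: "d > 0" "\<forall>t'\<in>UNIV. dist t' t < d \<longrightarrow> dist (x t') (x t) < e"
      using assms[unfolded continuous_on_iff, rule_format, OF UNIV_I e(1)] by blast
    have "lc {t. x t \<in> B} t"
      unfolding lc_def
    proof (intro exI[of _ d] conjI allI impI)
      show "d > 0" by fact
      fix y assume "\<bar>y - t\<bar> < d"
      then have "dist y t < d" by (simp add: dist_real_def)
      then have "dist (x y) (x t) < e" using d(2) by blast
      then have xy: "\<bar>x y - x t\<bar> < e" by (simp add: dist_real_def)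
      show "y \<in> {t. x t \<in> B} \<longleftrightarrow> t \<in> {t. x t \<in> B}" using e(2)[rule_format, OF xy] by simp
    qed
    then show False using t by (simp add: lc_iff)
  qed
qed

lemma Rset_Until:
  assumes "t + c \<in> Rset B x \<phi> \<or> t + c \<in> Rset B x \<psi>" "c \<in> {0, max 0 (Inf I), max 0 (Sup I)}"
  shows "t \<in> Rset B x (Until \<phi> I \<psi>)"
proof -
  obtain a d where ad: "(a, d) \<in> shifts \<phi> \<union> shifts \<psi>" "x (t + c + d) \<in> frontier (B a)"
    using assms(1) unfolding Rset_def by auto
  have "(a, d + c) \<in> shifts (Until \<phi> I \<psi>)" using ad(1) assms(2) by force
  moreover have "x (t + (d + c)) \<in> frontier (B a)" using ad(2) by (simp add: algebra_simps)
  ultimately show ?thesis unfolding Rset_def by blast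
qed

lemma frontier_sat:
  fixes x :: "real \<Rightarrow> real"
  assumes x: "continuous_on UNIV x"
  shows "wf_mtl \<phi> \<Longrightarrow> frontier {t. sat B x \<phi> t} \<subseteq> Rset B x \<phi>"
proof (induction \<phi>)
  case MTrue
  then show ?case by simp
next
  case (Atom a)
  then show ?case using atom_frontier[OF x, of "B a"] by (simp add: Rset_def)
next
  case (Neg \<phi>)
  have "{t. sat B x (Neg \<phi>) t} = - {t. sat B x \<phi> t}" by auto
  then show ?case using Neg by (simp add: Rset_def)
next
  case (Conj \<phi> \<psi>)
  have "{t. sat B x (Conj \<phi> \<psi>) t} = {t. sat B x \<phi> t} \<inter> {t. sat B x \<psi> t}" by auto
  then have "frontier {t. sat B x (Conj \<phi> \<psi>) t} \<subseteq> frontier {t. sat B x \<phi> t} \<union> frontier {t. sat B x \<psi> t}"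
    using frontier_Int_subset by metis
  also have "\<dots> \<subseteq> Rset B x \<phi> \<union> Rset B x \<psi>" using Conj by auto
  also have "\<dots> \<subseteq> Rset B x (Conj \<phi> \<psi>)" by (auto simp: Rset_def)
  finally show ?case .
next
  case (Until \<phi> I \<psi>)
  define Ps where "Ps = {t. sat B x \<phi> t}"
  define Qs where "Qs = {t. sat B x \<psi> t}"
  have wf: "is_interval I" "I \<subseteq> {0..}" "wf_mtl \<phi>" "wf_mtl \<psi>" using Until.prems by auto
  have IHP: "frontier Ps \<subseteq> Rset B x \<phi>" using Until.IH(1) wf(3) by (simp add: Ps_def)
  have IHQ: "frontier Qs \<subseteq> Rset B x \<psi>" using Until.IH(2) wf(4) by (simp add: Qs_def)
  have U: "{t. sat B x (Until \<phi> I \<psi>) t} = {t. \<exists>s\<in>I. t + s \<in> Qs \<and> (\<forall>s'\<in>{0..<s}. t + s' \<in> Ps)}"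
    by (simp add: Ps_def Qs_def)
  show ?case
  proof (cases "I = {}")
    case True
    then show ?thesis by simp
  next
    case False
    have "0 \<le> Inf I" using False wf(2) by (intro cInf_greatest) auto
    then have Inf0: "max 0 (Inf I) = Inf I" by simp
    have Sup0: "max 0 (Sup I) = Sup I" if "bdd_above I"
    proof -
      obtain s where "s \<in> I" using False by blast
      then have "s \<le> Sup I" "0 \<le> s" using that wf(2) by (auto intro: cSup_upper)
      then show ?thesis by simp
    qed
    show ?thesis unfolding U
    proof
      fix t0 assume t0: "t0 \<in> frontier {t. \<exists>s\<in>I. t + s \<in> Qs \<and> (\<forall>s'\<in>{0..<s}. t + s' \<in> Ps)}"
      show "t0 \<in> Rset B x (Until \<phi> I \<psi>)"
      proof (rule ccontr)
        assume nt: "t0 \<notin> Rset B x (Until \<phi> I \<psi>)"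
        have L: "lc Ps (t0 + c) \<and> lc Qs (t0 + c)" if c: "c \<in> {0, max 0 (Inf I), max 0 (Sup I)}" for c
        proof -
          have "t0 + c \<notin> Rset B x \<phi>" "t0 + c \<notin> Rset B x \<psi>" using Rset_Until[OF _ c] nt by blast+
          then show ?thesis using IHP IHQ by (auto simp: lc_iff)
        qed
        have "lc {t. \<exists>s\<in>I. t + s \<in> Qs \<and> (\<forall>s'\<in>{0..<s}. t + s' \<in> Ps)} t0"
        proof (rule until_lc[OF wf(1,2) False])
          show "lc Ps t0" "lc Qs t0" using L[of 0] by simp_all
          show "lc Ps (t0 + Inf I)" "lc Qs (t0 + Inf I)" using L[of "max 0 (Inf I)"] Inf0 by simp_all
          show "lc Ps (t0 + Sup I)" "lc Qs (t0 + Sup I)" if "bdd_above I"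
            using L[of "max 0 (Sup I)"] Sup0[OF that] by simp_all
        qed
        then show False using t0 by (simp add: lc_iff)
      qed
    qed
  qed
qed

lemma sat_local:
  "wf_mtl \<phi> \<Longrightarrow> t \<ge> 0 \<Longrightarrow> (\<And>s. s \<ge> 0 \<Longrightarrow> x s = y s) \<Longrightarrow> sat B x \<phi> t = sat B y \<phi> t"
proof (induction \<phi> arbitrary: t)
  case (Until \<phi> I \<psi>)
  have I0: "\<And>s. s \<in> I \<Longrightarrow> s \<ge> 0" using Until.prems(1) by auto
  have eq1: "sat B x \<psi> (t+s) = sat B y \<psi> (t+s)" if "s \<in> I" for s
    using Until.IH(2)[of "t+s"] Until.prems I0[OF that] by simp
  have eq2: "sat B x \<phi> (t+s) = sat B y \<phi> (t+s)" if "s \<ge> 0" for s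
    using Until.IH(1)[of "t+s"] Until.prems that by simp
  show ?case using eq1 eq2 by auto
qed auto



lemma closed_char:
  fixes x :: "real \<Rightarrow> real" and F :: "real set"
  assumes x: "continuous_on {0..} x" and F: "closed F" and t: "t \<ge> 0" and c: "c \<ge> 0"
  shows "x (t + c) \<in> F \<longleftrightarrow> (\<forall>n::nat. \<exists>q::rat. (of_rat q :: real) \<ge> 0 \<and> \<bar>of_rat q - t\<bar> < inverse (real (Suc n))
            \<and> x (of_rat q + c) \<in> (\<Union>z\<in>F. ball z (inverse (real (Suc n)))))"
proof -
  have tc: "t + c \<in> {0..}" using t c by simp
  have cont: "\<forall>\<epsilon>>0. \<exists>\<delta>>0. \<forall>x'\<in>{0..}. dist x' (t+c) < \<delta> \<longrightarrow> dist (x x') (x (t+c)) < \<epsilon>"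
    using bspec[OF x[unfolded continuous_on_iff] tc] .
  show ?thesis
  proof
    assume xin: "x (t + c) \<in> F"
    show "\<forall>n::nat. \<exists>q::rat. (of_rat q :: real) \<ge> 0 \<and> \<bar>of_rat q - t\<bar> < inverse (real (Suc n))
            \<and> x (of_rat q + c) \<in> (\<Union>z\<in>F. ball z (inverse (real (Suc n))))"
    proof
      fix n :: nat
      define r where "r = inverse (real (Suc n))"
      have r: "r > 0" unfolding r_def by simp
      obtain \<delta> where d: "\<delta> > 0" "\<forall>x'\<in>{0..}. dist x' (t+c) < \<delta> \<longrightarrow> dist (x x') (x (t+c)) < r"
        using cont r by blast
      define m where "m = min \<delta> r"
      have "t < t + m" using d(1) r unfolding m_def by simp
      then obtain q where q: "q \<in> \<rat>" "t < q" "q < t + m" using Rats_dense_in_real by blast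
      obtain q' where q': "q = of_rat q'" using q(1) Rats_cases by blast
      have q0: "of_rat q' \<ge> (0::real)" using q(2) t q' by linarith
      have "\<bar>of_rat q' - t\<bar> < m" using q q' by simp
      then have qr: "\<bar>of_rat q' - t\<bar> < r" and qd: "\<bar>of_rat q' - t\<bar> < \<delta>" unfolding m_def by simp_all
      have "of_rat q' + c \<in> {0..}" using q0 c by simp
      moreover have "dist (of_rat q' + c) (t+c) < \<delta>" using qd by (simp add: dist_real_def)
      ultimately have "dist (x (of_rat q' + c)) (x (t+c)) < r" using d(2) by blast
      then have "x (of_rat q' + c) \<in> ball (x (t + c)) r" by (simp add: dist_commute)
      then have "x (of_rat q' + c) \<in> (\<Union>z\<in>F. ball z r)" using xin by blast
      then show "\<exists>q::rat. (of_rat q :: real) \<ge> 0 \<and> \<bar>of_rat q - t\<bar> < inverse (real (Suc n))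
            \<and> x (of_rat q + c) \<in> (\<Union>z\<in>F. ball z (inverse (real (Suc n))))"
        using q0 qr unfolding r_def by blast
    qed
  next
    assume H: "\<forall>n::nat. \<exists>q::rat. (of_rat q :: real) \<ge> 0 \<and> \<bar>of_rat q - t\<bar> < inverse (real (Suc n))
            \<and> x (of_rat q + c) \<in> (\<Union>z\<in>F. ball z (inverse (real (Suc n))))"
    show "x (t + c) \<in> F"
    proof (rule ccontr)
      assume "x (t + c) \<notin> F"
      then have "x (t + c) \<in> - F" by simp
      then obtain \<epsilon> where e: "\<epsilon> > 0" "ball (x (t + c)) \<epsilon> \<subseteq> - F"
        using F open_contains_ball_eq[of "- F"] by (auto simp: closed_def)
      have "\<epsilon>/2 > 0" using e by simp
      then obtain \<delta> where d: "\<delta> > 0" "\<forall>x'\<in>{0..}. dist x' (t+c) < \<delta> \<longrightarrow> dist (x x') (x (t+c)) < \<epsilon>/2"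
        using cont by blast
      have "min \<delta> (\<epsilon>/2) > 0" using d e by simp
      then obtain n :: nat where n: "inverse (real (Suc n)) < min \<delta> (\<epsilon>/2)"
        using reals_Archimedean by blast
      obtain q :: rat where q: "of_rat q \<ge> (0::real)" "\<bar>of_rat q - t\<bar> < inverse (real (Suc n))"
        "x (of_rat q + c) \<in> (\<Union>z\<in>F. ball z (inverse (real (Suc n))))"
        using H by blast
      obtain z where z: "z \<in> F" "dist z (x (of_rat q + c)) < inverse (real (Suc n))"
        using q(3) by auto
      have "of_rat q + c \<in> {0..}" using q(1) c by simp
      moreover have "dist (of_rat q + c) (t+c) < \<delta>" using q(2) n by (simp add: dist_real_def)
      ultimately have "dist (x (of_rat q + c)) (x (t+c)) < \<epsilon>/2" using d(2) by blast
      moreover have "dist z (x (of_rat q + c)) < \<epsilon>/2" using z(2) n by simp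
      ultimately have "dist (x (t + c)) z < \<epsilon>"
        using dist_triangle[of "x (t+c)" z "x (of_rat q + c)"] by (simp add: dist_commute)
      then have "z \<in> - F" using e(2) by auto
      then show False using z(1) by simp
    qed
  qed
qed

lemma Kac_sets:
  fixes M :: "'w measure" and N :: "real measure" and X :: "real \<Rightarrow> 'w \<Rightarrow> real"
  assumes O: "\<Omega>0 \<in> sets M" and cont: "\<And>\<omega>. \<omega> \<in> \<Omega>0 \<Longrightarrow> continuous_on {0..} (\<lambda>t. X t \<omega>)"
    and meas: "\<And>t. t \<ge> 0 \<Longrightarrow> X t \<in> borel_measurable M"
    and F: "closed F" and c: "c \<ge> 0"
    and HN: "\<And>S. S \<in> sets borel \<Longrightarrow> S \<subseteq> {0..} \<Longrightarrow> S \<in> sets N"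
  shows "{p. fst p \<in> \<Omega>0 \<and> snd p \<ge> 0 \<and> X (snd p + c) (fst p) \<in> F} \<in> sets (M \<Otimes>\<^sub>M N)"
proof -
  define r where "r n = inverse (real (Suc n))" for n :: nat
  define G where "G n = (\<Union>z\<in>F. ball z (r n))" for n
  define A where "A n q = (if (of_rat q :: real) \<ge> 0 then X (of_rat q + c) -` G n \<inter> space M else {})" for n q
  define T where "T n q = {0..} \<inter> ball (of_rat q :: real) (r n)" for n q
  have eq: "{p. fst p \<in> \<Omega>0 \<and> snd p \<ge> 0 \<and> X (snd p + c) (fst p) \<in> F}
      = (\<Omega>0 \<times> {0..}) \<inter> (\<Inter>n. \<Union>q. A n q \<times> T n q)"
  proof (rule set_eqI)
    fix p :: "'w \<times> real"
    obtain \<omega> t where p: "p = (\<omega>, t)" by fastforce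
    show "p \<in> {p. fst p \<in> \<Omega>0 \<and> snd p \<ge> 0 \<and> X (snd p + c) (fst p) \<in> F} \<longleftrightarrow>
          p \<in> (\<Omega>0 \<times> {0..}) \<inter> (\<Inter>n. \<Union>q. A n q \<times> T n q)"
    proof (cases "\<omega> \<in> \<Omega>0 \<and> t \<ge> 0")
      case False
      then show ?thesis unfolding p by auto
    next
      case True
      then have om: "\<omega> \<in> space M" using sets.sets_into_space[OF O] by blast
      have "X (t + c) \<omega> \<in> F \<longleftrightarrow> (\<forall>n::nat. \<exists>q::rat. (of_rat q :: real) \<ge> 0 \<and> \<bar>of_rat q - t\<bar> < inverse (real (Suc n))
            \<and> X (of_rat q + c) \<omega> \<in> (\<Union>z\<in>F. ball z (inverse (real (Suc n)))))"
        using closed_char[OF cont[of \<omega>] F _ c, of t] True by simp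
      also have "\<dots> \<longleftrightarrow> (\<forall>n. \<exists>q. \<omega> \<in> A n q \<and> t \<in> T n q)"
        using om True by (simp add: A_def T_def G_def r_def dist_real_def conj_commute conj_left_commute) blast
      finally show ?thesis unfolding p using True by simp
    qed
  qed
  have GA: "A n q \<in> sets M" for n q
  proof (cases "(of_rat q :: real) \<ge> 0")
    case True
    have "open (G n)" unfolding G_def by (intro open_UN) auto
    then have "G n \<in> sets borel" by simp
    then show ?thesis using True meas[of "of_rat q + c"] c
      unfolding A_def by (simp add: measurable_sets)
  next
    case False
    then show ?thesis unfolding A_def by simp
  qed
  have GT: "T n q \<in> sets N" for n q
    unfolding T_def by (intro HN) auto
  have U: "(\<Union>q. A n q \<times> T n q) \<in> sets (M \<Otimes>\<^sub>M N)" for n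
    by (intro sets.countable_UN') (auto intro: pair_measureI GA GT)
  have "(\<Inter>n. \<Union>q. A n q \<times> T n q) \<in> sets (M \<Otimes>\<^sub>M N)"
    using U by (intro sets.countable_INT') auto
  moreover have "\<Omega>0 \<times> {0..} \<in> sets (M \<Otimes>\<^sub>M N)"
    using O by (intro pair_measureI HN) auto
  ultimately show ?thesis unfolding eq by (intro sets.Int)
qed

lemma X_null:
  fixes M :: "'w measure" and X :: "real \<Rightarrow> 'w \<Rightarrow> real"
  assumes d: "distributed M lborel (X s) f" and G: "G \<in> null_sets lborel"
  shows "{\<omega>\<in>space M. X s \<omega> \<in> G} \<in> null_sets M"
proof -
  have Gs: "G \<in> sets lborel" using G by (rule null_setsD2)
  have "emeasure M (X s -` G \<inter> space M) = (\<integral>\<^sup>+x. f x * indicator G x \<partial>lborel)"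
    by (rule distributed_emeasure[OF d Gs])
  also have "\<dots> = (\<integral>\<^sup>+x. 0 \<partial>(lborel :: real measure))"
  proof (rule nn_integral_cong_AE)
    show "AE x in lborel. f x * indicator G x = 0"
      using AE_not_in[OF G] by (rule eventually_mono) simp
  qed
  also have "\<dots> = 0" by simp
  finally have e0: "emeasure M (X s -` G \<inter> space M) = 0" .
  have ms: "X s -` G \<inter> space M \<in> sets M"
    using measurable_sets[OF distributed_measurable[OF d] Gs] .
  have "{\<omega>\<in>space M. X s \<omega> \<in> G} = X s -` G \<inter> space M" by auto
  then show ?thesis using e0 ms by (simp add: null_setsI)
qed

theorem lemma6p14:
  fixes M :: "'w measure" and X :: "real \<Rightarrow> 'w \<Rightarrow> real"
    and B :: "'a \<Rightarrow> real set" and \<phi> :: "'a mtl"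
  assumes "prob_space M" and "complete_measure M"
    and "\<And>t. t \<ge> 0 \<Longrightarrow> X t \<in> borel_measurable M"
    and "AE \<omega> in M. continuous_on {0..} (\<lambda>t. X t \<omega>)"
    and "\<And>t. t > 0 \<Longrightarrow> \<exists>f. distributed M lborel (X t) f"
    and "\<And>a. B a \<in> sets borel"
    and "\<And>a. frontier (B a) \<in> null_sets lborel"
    and "wf_mtl \<phi>"
  shows "\<exists>K. K \<in> sets (M \<Otimes>\<^sub>M restrict_space borel {0..}) \<and>
    (AE \<omega> in M. closed {t. (\<omega>, t) \<in> K}) \<and>
    (AE \<omega> in M. {t. (\<omega>, t) \<in> K} \<in> null_sets lborel) \<and>
    (\<forall>t>0. measure M {\<omega> \<in> space M. (\<omega>, t) \<in> K} = 0) \<and>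
    (\<forall>\<omega>\<in>space M. (top_of_set {0..}) frontier_of (sem B X \<phi> \<omega>) \<subseteq> {t. (\<omega>, t) \<in> K})"
proof -
  interpret P: prob_space M by fact
  interpret C: complete_measure M by fact
  note meas = assms(3)
  define \<Omega>0 where "\<Omega>0 = {\<omega>\<in>space M. continuous_on {0..} (\<lambda>t. X t \<omega>)}"
  define N0 where "N0 = space M - \<Omega>0"
  from assms(4) obtain N where N: "{\<omega>\<in>space M. \<not> continuous_on {0..} (\<lambda>t. X t \<omega>)} \<subseteq> N"
    "emeasure M N = 0" "N \<in> sets M" by (rule AE_E)
  have "N \<in> null_sets M" using N by (simp add: null_setsI)
  moreover have "N0 \<subseteq> N" using N(1) unfolding N0_def \<Omega>0_def by auto
  ultimately have N0null: "N0 \<in> null_sets M" using C.complete2 by blast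
  then have N0s: "N0 \<in> sets M" by (rule null_setsD2)
  have \<Omega>0eq: "\<Omega>0 = space M - N0" unfolding N0_def \<Omega>0_def by auto
  have \<Omega>0s: "\<Omega>0 \<in> sets M" unfolding \<Omega>0eq using N0s by (rule sets.compl_sets)
  have cont: "continuous_on {0..} (\<lambda>t. X t \<omega>)" if "\<omega> \<in> \<Omega>0" for \<omega>
    using that unfolding \<Omega>0_def by simp
  define SH where "SH = shifts \<phi>"
  have SHf: "finite SH" unfolding SH_def by (rule shifts_finite)
  have SH0: "snd p \<ge> 0" if "p \<in> SH" for p
    using that shifts_nonneg[of "fst p" "snd p" \<phi>] unfolding SH_def by simp
  define F where "F a = frontier (B a)" for a
  have Fc: "closed (F a)" for a unfolding F_def by (rule frontier_closed)
  have Fn: "F a \<in> null_sets lborel" for a unfolding F_def by (rule assms(7))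
  define Kac where "Kac a c = {p. fst p \<in> \<Omega>0 \<and> snd p \<ge> 0 \<and> X (snd p + c) (fst p) \<in> F a}" for a c
  define K where "K = (N0 \<times> {0..}) \<union> (\<Union>p\<in>SH. Kac (fst p) (snd p))"
  have Kmeas: "K \<in> sets (M \<Otimes>\<^sub>M Nm)"
    if HN: "\<And>S. S \<in> sets borel \<Longrightarrow> S \<subseteq> {0..} \<Longrightarrow> S \<in> sets Nm" for Nm :: "real measure"
  proof -
    have "N0 \<times> {0..} \<in> sets (M \<Otimes>\<^sub>M Nm)" using N0s by (intro pair_measureI HN) auto
    moreover have "(\<Union>p\<in>SH. Kac (fst p) (snd p)) \<in> sets (M \<Otimes>\<^sub>M Nm)"
    proof (intro sets.finite_UN SHf)
      fix p assume "p \<in> SH"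
      then show "Kac (fst p) (snd p) \<in> sets (M \<Otimes>\<^sub>M Nm)"
        unfolding Kac_def using Kac_sets[OF \<Omega>0s cont meas Fc SH0 HN] by blast
    qed
    ultimately show ?thesis unfolding K_def by (rule sets.Un)
  qed
  have K1: "K \<in> sets (M \<Otimes>\<^sub>M restrict_space borel {0..})"
    by (rule Kmeas) (simp add: sets_restrict_space_iff)
  have KL: "K \<in> sets (M \<Otimes>\<^sub>M lborel)"
    by (rule Kmeas) simp
  have N0sp: "N0 \<subseteq> space M" and \<Omega>0sp: "\<Omega>0 \<subseteq> space M" and dis: "N0 \<inter> \<Omega>0 = {}"
    and un: "space M = N0 \<union> \<Omega>0"
    unfolding N0_def \<Omega>0_def by auto
  have secN0: "{t. (\<omega>, t) \<in> K} = {0..}" if "\<omega> \<in> N0" for \<omega>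
  proof -
    have "\<omega> \<notin> \<Omega>0" using that dis by blast
    then show ?thesis using that unfolding K_def Kac_def by auto
  qed
  have secO: "{t. (\<omega>, t) \<in> K} = (\<Union>p\<in>SH. {0..} \<inter> (\<lambda>t. X (t + snd p) \<omega>) -` F (fst p))"
    if "\<omega> \<in> \<Omega>0" for \<omega>
  proof -
    have "\<omega> \<notin> N0" using that dis by blast
    then show ?thesis using that unfolding K_def Kac_def by auto
  qed
  have secout: "{t. (\<omega>, t) \<in> K} = {}" if "\<omega> \<notin> space M" for \<omega>
  proof -
    have "\<omega> \<notin> N0" "\<omega> \<notin> \<Omega>0" using that N0sp \<Omega>0sp by blast+
    then show ?thesis unfolding K_def Kac_def by auto
  qed
  have sec_sub: "{\<omega>\<in>space M. (\<omega>, t) \<in> K} \<subseteq> N0 \<union> (\<Union>p\<in>SH. {\<omega>\<in>space M. X (t + snd p) \<omega> \<in> F (fst p)})" for t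
    unfolding K_def Kac_def by auto
  have Xn: "{\<omega>\<in>space M. X s \<omega> \<in> F a} \<in> null_sets M" if s0: "s > 0" for s a
  proof -
    obtain f where "distributed M lborel (X s) f" using assms(5)[OF s0] by blast
    then show ?thesis using X_null Fn by blast
  qed
  have sec_null: "{\<omega>\<in>space M. (\<omega>, t) \<in> K} \<in> null_sets M" if "t > 0" for t
  proof -
    have "(\<Union>p\<in>SH. {\<omega>\<in>space M. X (t + snd p) \<omega> \<in> F (fst p)}) \<in> null_sets M"
    proof (intro null_sets_UN')
      show "countable SH" using SHf by (rule countable_finite)
      fix p assume "p \<in> SH"
      then have "t + snd p > 0" using SH0 that by (simp add: add_pos_nonneg)
      then show "{\<omega>\<in>space M. X (t + snd p) \<omega> \<in> F (fst p)} \<in> null_sets M" by (rule Xn)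
    qed
    then have "N0 \<union> (\<Union>p\<in>SH. {\<omega>\<in>space M. X (t + snd p) \<omega> \<in> F (fst p)}) \<in> null_sets M"
      using N0null by (rule null_sets.Un[rotated])
    then show ?thesis using C.complete2[OF sec_sub] by blast
  qed
  show ?thesis
  proof (intro exI[of _ K] conjI)
    show "K \<in> sets (M \<Otimes>\<^sub>M restrict_space borel {0..})" by (rule K1)
  next
    show "AE \<omega> in M. closed {t. (\<omega>, t) \<in> K}"
    proof (rule AE_I2)
      fix \<omega> assume om: "\<omega> \<in> space M"
      show "closed {t. (\<omega>, t) \<in> K}"
      proof (cases "\<omega> \<in> \<Omega>0")
        case True
        have "closed ({0..} \<inter> (\<lambda>t. X (t + snd p) \<omega>) -` F (fst p))" if "p \<in> SH" for p
        proof (rule continuous_closed_preimage)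
          show "continuous_on {0..} (\<lambda>t. X (t + snd p) \<omega>)"
            using SH0[OF that]
            by (intro continuous_on_compose2[OF cont[OF True], of _ "\<lambda>t. t + snd p"])
               (auto intro!: continuous_intros)
        qed (auto simp: Fc)
        then show ?thesis unfolding secO[OF True] using SHf by (intro closed_UN) auto
      next
        case False
        then have "\<omega> \<in> N0" using om unfolding N0_def by simp
        then show ?thesis unfolding secN0[OF \<open>\<omega> \<in> N0\<close>] by simp
      qed
    qed
  next
    interpret PS: pair_sigma_finite M lborel
      by (intro pair_sigma_finite.intro P.sigma_finite_measure_axioms sigma_finite_lborel)
    have "AE t in lborel. emeasure M ((\<lambda>x. (x, t)) -` K) = 0"
      using AE_lborel_singleton[of 0]
    proof (rule eventually_mono)
      fix t :: real assume t: "t \<noteq> 0"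
      show "emeasure M ((\<lambda>x. (x, t)) -` K) = 0"
      proof (cases "t > 0")
        case True
        have "(\<lambda>x. (x, t)) -` K = {\<omega>\<in>space M. (\<omega>, t) \<in> K}"
          using secout by blast
        then show ?thesis using null_setsD1[OF sec_null[OF True]] by simp
      next
        case False
        then have "(\<lambda>x. (x, t)) -` K = {}" using t unfolding K_def Kac_def by auto
        then show ?thesis by simp
      qed
    qed
    then have "(\<integral>\<^sup>+t. emeasure M ((\<lambda>x. (x, t)) -` K) \<partial>lborel) = (\<integral>\<^sup>+t. 0 \<partial>(lborel :: real measure))"
      by (rule nn_integral_cong_AE)
    then have "emeasure (M \<Otimes>\<^sub>M lborel) K = 0"
      using PS.emeasure_pair_measure_alt2[OF KL] by simp
    then have "(\<integral>\<^sup>+\<omega>. emeasure lborel (Pair \<omega> -` K) \<partial>M) = 0"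
      using lborel.emeasure_pair_measure_alt[OF KL] by simp
    then have "AE \<omega> in M. emeasure lborel (Pair \<omega> -` K) = 0"
      using nn_integral_0_iff_AE[OF lborel.measurable_emeasure_Pair[OF KL]] by simp
    then show "AE \<omega> in M. {t. (\<omega>, t) \<in> K} \<in> null_sets lborel"
    proof (rule eventually_mono)
      fix \<omega> assume "emeasure lborel (Pair \<omega> -` K) = 0"
      moreover have "Pair \<omega> -` K \<in> sets lborel" using KL by (rule sets_Pair1)
      ultimately have "Pair \<omega> -` K \<in> null_sets lborel" by (simp add: null_setsI)
      moreover have "Pair \<omega> -` K = {t. (\<omega>, t) \<in> K}" by auto
      ultimately show "{t. (\<omega>, t) \<in> K} \<in> null_sets lborel" by simp
    qed
  next
    show "\<forall>t>0. measure M {\<omega> \<in> space M. (\<omega>, t) \<in> K} = 0"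
      using sec_null by (auto intro: measure_eq_0_null_sets)
  next
    show "\<forall>\<omega>\<in>space M. (top_of_set {0..}) frontier_of (sem B X \<phi> \<omega>) \<subseteq> {t. (\<omega>, t) \<in> K}"
    proof
      fix \<omega> assume om: "\<omega> \<in> space M"
      have ftop: "(top_of_set {0..}) frontier_of S \<subseteq> {0..}" for S :: "real set"
        using frontier_of_subset_topspace[of "top_of_set {0..}" S] by simp
      show "(top_of_set {0..}) frontier_of (sem B X \<phi> \<omega>) \<subseteq> {t. (\<omega>, t) \<in> K}"
      proof (cases "\<omega> \<in> \<Omega>0")
        case False
        then have "\<omega> \<in> N0" using om unfolding N0_def by simp
        then show ?thesis unfolding secN0[OF \<open>\<omega> \<in> N0\<close>] using ftop by blast
      next
        case True
        define x where "x s = X (max 0 s) \<omega>" for s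
        have xc: "continuous_on UNIV x"
          unfolding x_def
          by (intro continuous_on_compose2[OF cont[OF True], of _ "\<lambda>s. max 0 s"])
             (auto intro!: continuous_intros)
        have xeq: "x s = X s \<omega>" if "s \<ge> 0" for s using that unfolding x_def by simp
        have semeq: "sem B X \<phi> \<omega> = {0..} \<inter> {t. sat B x \<phi> t}"
          unfolding sem_def using sat_local[OF assms(8), of _ "\<lambda>s. X s \<omega>" x B] xeq by auto
        have "(top_of_set {0..}) frontier_of (sem B X \<phi> \<omega>) = (top_of_set {0..}) frontier_of {t. sat B x \<phi> t}"
          unfolding semeq using frontier_of_restrict[of "top_of_set {0..}" "{t. sat B x \<phi> t}"] by simp
        also have "\<dots> \<subseteq> {0..} \<inter> frontier {t. sat B x \<phi> t}"
          using ftop frontier_of_subtopology_subset[of "{0..}" euclidean "{t. sat B x \<phi> t}"] by auto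
        also have "\<dots> \<subseteq> {0..} \<inter> Rset B x \<phi>" using frontier_sat[OF xc assms(8)] by auto
        also have "\<dots> \<subseteq> {t. (\<omega>, t) \<in> K}"
        proof
          fix t assume t: "t \<in> {0..} \<inter> Rset B x \<phi>"
          then obtain a c where ac: "(a, c) \<in> SH" "x (t + c) \<in> frontier (B a)"
            unfolding Rset_def SH_def by auto
          have "c \<ge> 0" using SH0[OF ac(1)] by simp
          then have "X (t + c) \<omega> \<in> F a" using ac(2) xeq[of "t + c"] t unfolding F_def by simp
          then have "(\<omega>, t) \<in> Kac a c" unfolding Kac_def using True t by simp
          then show "t \<in> {t. (\<omega>, t) \<in> K}" unfolding K_def using ac(1) by force
        qed
        finally show ?thesis .
      qed
    qed
  qed
qed

end
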